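(* Fix a monomial order on $S$. Let $M\subseteq F$ be the submodule generated by elements $g_1,\dots,g_t,f_1,\dots,f_s\in F$, and let $L=Sg_1+\cdots+Sg_t$. For $k=0,\dots,s$ let $L_k=L+Sf_1+\cdots+Sf_k$. Then, as $\mathbb{K}$-vector spaces, \[ M=L\oplus\bigoplus_{i=1}^s f_i\cdot N_{L_{i-1}:f_i}. \]
   Context: Standing notation. $S=\mathbb{K}[x_1,\dots,x_n]$ and $F=Se_1\oplus\cdots\oplus Se_m$ is a free $S$-module. For a submodule $L'\subseteq F$ and $f\in F$, $L':f=\{p\in S: pf\in L'\}$ is an ideal of $S$. For an ideal $I\subseteq S$ and the fixed monomial order on $S$, $N_I$ is the $\mathbb{K}$-span of the monomials of $S$ not in the initial ideal of $I$. Finally, $f\cdot N_I=\{fp:p\in N_I\}$. *)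

theory Defs
  imports "HOL-Library.Poly_Mapping" "HOL-Library.Function_Algebras"
begin

text \<open>Polynomials in S = K[x_v : v in type v] are finitely supported maps from exponent vectors to K;
  a monomial is identified with its exponent vector.
  The free module F = S^m is represented as functions 'i \<Rightarrow> S (componentwise).\<close>

type_synonym ('v, 'k) mpoly = "('v \<Rightarrow>\<^sub>0 nat) \<Rightarrow>\<^sub>0 'k"

definition monomial_order :: "(('v \<Rightarrow>\<^sub>0 nat) \<Rightarrow> ('v \<Rightarrow>\<^sub>0 nat) \<Rightarrow> bool) \<Rightarrow> bool" where
  "monomial_order ord \<longleftrightarrow>
     (\<forall>a. ord a a) \<and>
     (\<forall>a b. ord a b \<and> ord b a \<longrightarrow> a = b) \<and>
     (\<forall>a b c. ord a b \<and> ord b c \<longrightarrow> ord a c) \<and>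
     (\<forall>a b. ord a b \<or> ord b a) \<and>
     (\<forall>a b c. ord a b \<longrightarrow> ord (a + c) (b + c)) \<and>
     (\<forall>a. ord 0 a)"

definition lead_mon :: "(('v \<Rightarrow>\<^sub>0 nat) \<Rightarrow> ('v \<Rightarrow>\<^sub>0 nat) \<Rightarrow> bool) \<Rightarrow> ('v, 'k::zero) mpoly \<Rightarrow> ('v \<Rightarrow>\<^sub>0 nat)" where
  "lead_mon ord p = (THE a. a \<in> Poly_Mapping.keys p \<and> (\<forall>b\<in>Poly_Mapping.keys p. ord b a))"

definition ideal_gen :: "('v, 'k::comm_ring_1) mpoly set \<Rightarrow> ('v, 'k) mpoly set" where
  "ideal_gen X = {\<Sum>x\<in>A. c x * x | A c. finite A \<and> A \<subseteq> X}"

definition init_ideal :: "(('v \<Rightarrow>\<^sub>0 nat) \<Rightarrow> ('v \<Rightarrow>\<^sub>0 nat) \<Rightarrow> bool) \<Rightarrow> ('v, 'k::comm_ring_1) mpoly set \<Rightarrow> ('v, 'k) mpoly set" where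
  "init_ideal ord I = ideal_gen {Poly_Mapping.single (lead_mon ord p) 1 | p. p \<in> I \<and> p \<noteq> 0}"

text \<open>N_I: the K-span of the monomials not in in(I), i.e. the polynomials all of
  whose monomials lie outside in(I).\<close>
definition std_span :: "(('v \<Rightarrow>\<^sub>0 nat) \<Rightarrow> ('v \<Rightarrow>\<^sub>0 nat) \<Rightarrow> bool) \<Rightarrow> ('v, 'k::comm_ring_1) mpoly set \<Rightarrow> ('v, 'k) mpoly set" where
  "std_span ord I = {p. \<forall>a\<in>Poly_Mapping.keys p. Poly_Mapping.single a 1 \<notin> init_ideal ord I}"

definition smult_vec :: "('v, 'k::comm_ring_1) mpoly \<Rightarrow> ('i \<Rightarrow> ('v, 'k) mpoly) \<Rightarrow> ('i \<Rightarrow> ('v, 'k) mpoly)" where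
  "smult_vec p f = (\<lambda>j. p * f j)"

definition submod_gen :: "('i \<Rightarrow> ('v, 'k::comm_ring_1) mpoly) set \<Rightarrow> ('i \<Rightarrow> ('v, 'k) mpoly) set" where
  "submod_gen X = {\<Sum>x\<in>A. smult_vec (c x) x | A c. finite A \<and> A \<subseteq> X}"

definition colon :: "('i \<Rightarrow> ('v, 'k::comm_ring_1) mpoly) set \<Rightarrow> ('i \<Rightarrow> ('v, 'k) mpoly) \<Rightarrow> ('v, 'k) mpoly set" where
  "colon L' f = {p. smult_vec p f \<in> L'}"

definition vec_times_set :: "('i \<Rightarrow> ('v, 'k::comm_ring_1) mpoly) \<Rightarrow> ('v, 'k) mpoly set \<Rightarrow> ('i \<Rightarrow> ('v, 'k) mpoly) set" where
  "vec_times_set f N = {smult_vec p f | p. p \<in> N}"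

end

theory Submission
  imports Defs "HOL-Library.Ramsey"
begin


lemma nat_no_strict_desc:
  fixes u :: "nat \<Rightarrow> nat"
  assumes "\<And>n. u (Suc n) < u n"
  shows False
proof -
  have "u n + n \<le> u 0" for n
  proof (induction n)
    case (Suc n)
    have "u (Suc n) < u n" by (rule assms)
    with Suc show ?case by simp
  qed simp
  from this[of "Suc (u 0)"] show False by simp
qed

lemma dickson_aux:
  fixes h :: "nat \<Rightarrow> 'v \<Rightarrow> nat"
  assumes "finite V" "infinite Z"
  shows "\<exists>Y\<subseteq>Z. infinite Y \<and> (\<forall>v\<in>V. \<forall>x\<in>Y. \<forall>y\<in>Y. x < y \<longrightarrow> h x v \<le> h y v)"
  using assms(1)
proof (induction V rule: finite_induct)
  case empty
  then show ?case using assms(2) by blast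
next
  case (insert v V)
  then obtain Y where Y: "Y \<subseteq> Z" "infinite Y" "\<forall>v\<in>V. \<forall>x\<in>Y. \<forall>y\<in>Y. x < y \<longrightarrow> h x v \<le> h y v"
    by blast
  define f where "f X = (if \<forall>x\<in>X. \<forall>y\<in>X. x < y \<longrightarrow> h x v \<le> h y v then 0 else (1::nat))" for X
  have "\<forall>x\<in>Y. \<forall>y\<in>Y. x \<noteq> y \<longrightarrow> f {x, y} < 2" by (simp add: f_def)
  from Ramsey2[OF Y(2) this] obtain Y' t where Y': "Y' \<subseteq> Y" "infinite Y'" "t < 2"
    "\<forall>x\<in>Y'. \<forall>y\<in>Y'. x \<noteq> y \<longrightarrow> f {x, y} = t" by blast
  have key: "x \<in> Y' \<Longrightarrow> y \<in> Y' \<Longrightarrow> x < y \<Longrightarrow> (f {x,y} = 0 \<longleftrightarrow> h x v \<le> h y v)" for x y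
    by (auto simp: f_def)
  show ?case
  proof (cases "t = 0")
    case True
    then have "\<forall>x\<in>Y'. \<forall>y\<in>Y'. x < y \<longrightarrow> h x v \<le> h y v"
      using key Y'(4) True by (metis less_irrefl)
    then show ?thesis using Y Y' by (intro exI[of _ Y']) blast
  next
    case False
    then have T: "\<forall>x\<in>Y'. \<forall>y\<in>Y'. x < y \<longrightarrow> h y v < h x v"
      using key Y'(4) False \<open>t < 2\<close> by (metis less_irrefl not_le less_2_cases)
    define e where "e = enumerate Y'"
    have "strict_mono e" using Y'(2) by (simp add: e_def strict_mono_enumerate)
    moreover have "e n \<in> Y'" for n using Y'(2) by (simp add: e_def enumerate_in_set)
    ultimately have "h (e (Suc n)) v < h (e n) v" for n
      using T by (simp add: strict_mono_def)
    from nat_no_strict_desc[of "\<lambda>n. h (e n) v", OF this] show ?thesis ..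
  qed
qed

lemma dickson:
  fixes a :: "nat \<Rightarrow> ('v::finite \<Rightarrow>\<^sub>0 nat)"
  shows "\<exists>i j. i < j \<and> (\<forall>v. Poly_Mapping.lookup (a i) v \<le> Poly_Mapping.lookup (a j) v)"
proof -
  obtain Y where Y: "infinite Y" "\<forall>v\<in>UNIV. \<forall>x\<in>Y. \<forall>y\<in>Y. x < y \<longrightarrow> Poly_Mapping.lookup (a x) v \<le> Poly_Mapping.lookup (a y) v"
    using dickson_aux[of "UNIV::'v set" "UNIV::nat set" "\<lambda>n v. Poly_Mapping.lookup (a n) v"] by auto
  obtain x where x: "x \<in> Y" using Y(1) by (metis finite.emptyI ex_in_conv)
  obtain y where y: "y \<in> Y" "x < y" using Y(1) by (meson infinite_nat_iff_unbounded)
  show ?thesis using Y(2) x y by blast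
qed

lemma wf_ord:
  fixes ord :: "('v::finite \<Rightarrow>\<^sub>0 nat) \<Rightarrow> ('v \<Rightarrow>\<^sub>0 nat) \<Rightarrow> bool"
  assumes mo: "monomial_order ord"
  shows "wf {(x,y). ord x y \<and> x \<noteq> y}"
proof (rule ccontr)
  assume "\<not> wf {(x,y). ord x y \<and> x \<noteq> y}"
  then obtain a where a: "\<And>i. ord (a (Suc i)) (a i) \<and> a (Suc i) \<noteq> a i"
    unfolding wf_iff_no_infinite_down_chain by auto
  have refl: "\<And>x. ord x x" and antis: "\<And>x y. ord x y \<Longrightarrow> ord y x \<Longrightarrow> x = y"
    and trans: "\<And>x y z. ord x y \<Longrightarrow> ord y z \<Longrightarrow> ord x z"
    and comp: "\<And>x y c. ord x y \<Longrightarrow> ord (x + c) (y + c)" and zero: "\<And>x. ord 0 x"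
    using mo unfolding monomial_order_def by blast+
  have le: "i \<le> j \<Longrightarrow> ord (a j) (a i)" for i j
  proof (induction j rule: dec_induct)
    case base then show ?case by (rule refl)
  next
    case (step n) then show ?case using a trans by blast
  qed
  obtain i j where ij: "i < j" "\<forall>v. Poly_Mapping.lookup (a i) v \<le> Poly_Mapping.lookup (a j) v"
    using dickson by blast
  have "a j = (a j - a i) + a i"
    by (rule poly_mapping_eqI) (use ij(2) in \<open>simp add: lookup_add lookup_minus\<close>)
  moreover have "ord (0 + a i) ((a j - a i) + a i)" using comp zero by blast
  ultimately have "ord (a i) (a j)" by simp
  moreover have "ord (a j) (a (Suc i))" using le ij(1) by simp
  ultimately have "ord (a (Suc i)) (a i)" "ord (a i) (a (Suc i))" using a trans by blast+
  with a antis show False by blast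
qed



lemma smult_vec_zero [simp]: "smult_vec 0 x = 0"
  by (simp add: smult_vec_def fun_eq_iff)
lemma smult_vec_zero2 [simp]: "smult_vec p 0 = 0"
  by (simp add: smult_vec_def fun_eq_iff)
lemma smult_vec_add1: "smult_vec (p + q) x = smult_vec p x + smult_vec q x"
  by (simp add: smult_vec_def fun_eq_iff algebra_simps)
lemma smult_vec_add2: "smult_vec p (x + y) = smult_vec p x + smult_vec p y"
  by (simp add: smult_vec_def fun_eq_iff algebra_simps)
lemma smult_vec_assoc: "smult_vec p (smult_vec q x) = smult_vec (p * q) x"
  by (simp add: smult_vec_def fun_eq_iff algebra_simps)
lemma smult_vec_one [simp]: "smult_vec 1 x = x"
  by (simp add: smult_vec_def fun_eq_iff)
lemma sum_fun_apply: "sum g A j = (\<Sum>x\<in>A. g x j)"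
  by (induction A rule: infinite_finite_induct) auto
lemma smult_vec_sum: "smult_vec p (sum g A) = (\<Sum>x\<in>A. smult_vec p (g x))"
  by (simp add: smult_vec_def fun_eq_iff sum_fun_apply sum_distrib_left)
lemma smult_vec_uminus: "smult_vec (- p) x = - smult_vec p x"
  by (simp add: smult_vec_def fun_eq_iff)

lemma sg_zero: "0 \<in> submod_gen X"
  unfolding submod_gen_def by (rule CollectI, rule exI[of _ "{}"]) simp

lemma sg_gen: "x \<in> X \<Longrightarrow> x \<in> submod_gen X"
  unfolding submod_gen_def
  by (rule CollectI, rule exI[of _ "{x}"], rule exI[of _ "\<lambda>_. 1"]) simp

lemma sg_mono: "X \<subseteq> Y \<Longrightarrow> submod_gen X \<subseteq> submod_gen Y"
  unfolding submod_gen_def by blast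

lemma sg_smult: "m \<in> submod_gen X \<Longrightarrow> smult_vec p m \<in> submod_gen X"
proof -
  assume "m \<in> submod_gen X"
  then obtain A c where A: "finite A" "A \<subseteq> X" "m = (\<Sum>x\<in>A. smult_vec (c x) x)"
    unfolding submod_gen_def by blast
  have "smult_vec p m = (\<Sum>x\<in>A. smult_vec (p * c x) x)"
    by (simp add: A(3) smult_vec_sum smult_vec_assoc)
  then show ?thesis unfolding submod_gen_def
    by (intro CollectI exI[of _ A] exI[of _ "\<lambda>x. p * c x"]) (simp add: A)
qed

lemma sg_add: "m \<in> submod_gen X \<Longrightarrow> n \<in> submod_gen X \<Longrightarrow> m + n \<in> submod_gen X"
proof -
  assume "m \<in> submod_gen X" "n \<in> submod_gen X"
  then obtain A c B d where A: "finite A" "A \<subseteq> X" "m = (\<Sum>x\<in>A. smult_vec (c x) x)"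
    and B: "finite B" "B \<subseteq> X" "n = (\<Sum>x\<in>B. smult_vec (d x) x)"
    unfolding submod_gen_def by blast
  define c' where "c' x = (if x \<in> A then c x else 0)" for x
  define d' where "d' x = (if x \<in> B then d x else 0)" for x
  have "m = (\<Sum>x\<in>A \<union> B. smult_vec (c' x) x)"
    unfolding A(3) by (rule sum.mono_neutral_cong_left) (use A(1) B(1) in \<open>auto simp: c'_def\<close>)
  moreover have "n = (\<Sum>x\<in>A \<union> B. smult_vec (d' x) x)"
    unfolding B(3) by (rule sum.mono_neutral_cong_left) (use A(1) B(1) in \<open>auto simp: d'_def\<close>)
  ultimately have "m + n = (\<Sum>x\<in>A \<union> B. smult_vec (c' x + d' x) x)"
    by (simp add: smult_vec_add1 sum.distrib)
  then show ?thesis unfolding submod_gen_def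
    by (intro CollectI exI[of _ "A \<union> B"] exI[of _ "\<lambda>x. c' x + d' x"]) (simp add: A B)
qed

lemma sg_uminus: "m \<in> submod_gen X \<Longrightarrow> - m \<in> submod_gen X"
  using sg_smult[of m X "-1"] by (simp add: smult_vec_uminus)

lemma sg_diff: "m \<in> submod_gen X \<Longrightarrow> n \<in> submod_gen X \<Longrightarrow> m - n \<in> submod_gen X"
  using sg_add[of m X "-n"] sg_uminus[of n X] by simp

lemma sg_sum: "(\<And>i. i \<in> A \<Longrightarrow> w i \<in> submod_gen X) \<Longrightarrow> sum w A \<in> submod_gen X"
  by (induction A rule: infinite_finite_induct) (auto simp: sg_zero sg_add)

lemma sg_insert_dest: "m \<in> submod_gen (insert x X) \<Longrightarrow> \<exists>m'\<in>submod_gen X. \<exists>c. m = m' + smult_vec c x"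
proof -
  assume "m \<in> submod_gen (insert x X)"
  then obtain A c where A: "finite A" "A \<subseteq> insert x X" "m = (\<Sum>x\<in>A. smult_vec (c x) x)"
    unfolding submod_gen_def by blast
  show ?thesis
  proof (cases "x \<in> A")
    case True
    have "m = (\<Sum>y\<in>A - {x}. smult_vec (c y) y) + smult_vec (c x) x"
      unfolding A(3) using A(1) True by (simp add: sum.remove add.commute)
    moreover have "(\<Sum>y\<in>A - {x}. smult_vec (c y) y) \<in> submod_gen X"
      unfolding submod_gen_def using A by blast
    ultimately show ?thesis by blast
  next
    case False
    then have "m \<in> submod_gen X" unfolding submod_gen_def using A by blast
    then show ?thesis by (intro bexI[of _ m] exI[of _ 0]) auto
  qed
qed




definition is_ideal :: "('v, 'k::comm_ring_1) mpoly set \<Rightarrow> bool" where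
  "is_ideal I \<longleftrightarrow> 0 \<in> I \<and> (\<forall>p\<in>I. \<forall>q\<in>I. p + q \<in> I) \<and> (\<forall>p\<in>I. \<forall>q. q * p \<in> I)"

lemma lk1: "Poly_Mapping.lookup (Poly_Mapping.single (d::'v\<Rightarrow>\<^sub>0nat) (c::'k::comm_ring_1) * q) (d + b) = c * Poly_Mapping.lookup q b"
proof -
  have eq: "\<And>a X. (if d = a then c else 0) * X = (if d = a then c * X else (0::'k))" by simp
  show ?thesis
    unfolding lookup_mult lookup_single when_def eq Sum_any.delta' add_left_cancel by simp
qed

lemma lk0: "Poly_Mapping.lookup (Poly_Mapping.single (0::'v\<Rightarrow>\<^sub>0nat) (c::'k::comm_ring_1) * q) b = c * Poly_Mapping.lookup q b"
  using lk1[of 0 c q b] by simp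

lemma mo_props:
  assumes "monomial_order ord"
  shows "\<And>x. ord x x" "\<And>x y. ord x y \<Longrightarrow> ord y x \<Longrightarrow> x = y"
    "\<And>x y z. ord x y \<Longrightarrow> ord y z \<Longrightarrow> ord x z" "\<And>x y. ord x y \<or> ord y x"
    "\<And>x y c. ord x y \<Longrightarrow> ord (x + c) (y + c)" "\<And>x. ord 0 x"
  using assms unfolding monomial_order_def by blast+

lemma exists_max:
  assumes "monomial_order ord" "finite K" "K \<noteq> {}"
  shows "\<exists>a\<in>K. \<forall>b\<in>K. ord b a"
  using assms(2,3)
proof (induction K rule: finite_ne_induct)
  case (singleton x) then show ?case using mo_props(1)[OF assms(1)] by auto
next
  case (insert x F)
  then obtain a where a: "a \<in> F" "\<forall>b\<in>F. ord b a" by blast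
  show ?case
  proof (cases "ord x a")
    case True then show ?thesis using a by auto
  next
    case False
    then have "ord a x" using mo_props(4)[OF assms(1)] by blast
    then show ?thesis using a mo_props(1,3)[OF assms(1)] by blast
  qed
qed

lemma lead_mon_prop:
  assumes mo: "monomial_order ord" and p: "p \<noteq> 0"
  shows "lead_mon ord p \<in> Poly_Mapping.keys p \<and> (\<forall>b\<in>Poly_Mapping.keys p. ord b (lead_mon ord p))"
proof -
  obtain a where a: "a \<in> Poly_Mapping.keys p" "\<forall>b\<in>Poly_Mapping.keys p. ord b a"
    using exists_max[OF mo, of "Poly_Mapping.keys p"] p by auto
  have "\<exists>!a. a \<in> Poly_Mapping.keys p \<and> (\<forall>b\<in>Poly_Mapping.keys p. ord b a)"
    using a mo_props(2)[OF mo] by blast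
  then show ?thesis unfolding lead_mon_def by (rule theI')
qed

lemma std_inter:
  assumes mo: "monomial_order ord" and pI: "p \<in> I" and pN: "p \<in> std_span ord I"
  shows "p = 0"
proof (rule ccontr)
  assume p: "p \<noteq> 0"
  let ?a = "lead_mon ord p"
  have "?a \<in> Poly_Mapping.keys p" using lead_mon_prop[OF mo p] by blast
  moreover have "Poly_Mapping.single ?a 1 \<in> init_ideal ord I"
    unfolding init_ideal_def ideal_gen_def
    by (intro CollectI exI[of _ "{Poly_Mapping.single ?a 1}"] exI[of _ "\<lambda>_. 1"]) (use pI p in auto)
  ultimately show False using pN unfolding std_span_def by blast
qed

lemma reduce_exists:
  fixes ord :: "('v \<Rightarrow>\<^sub>0 nat) \<Rightarrow> ('v \<Rightarrow>\<^sub>0 nat) \<Rightarrow> bool" and I :: "('v, 'k::field) mpoly set"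
  assumes mo: "monomial_order ord" and I: "is_ideal I"
    and a: "Poly_Mapping.single a (1::'k) \<in> init_ideal ord I"
  shows "\<exists>h\<in>I. a \<in> Poly_Mapping.keys h \<and> (\<forall>b\<in>Poly_Mapping.keys h. ord b a)"
proof -
  obtain A :: "('v, 'k) mpoly set" and c :: "('v, 'k) mpoly \<Rightarrow> ('v, 'k) mpoly"
    where A: "finite A" "A \<subseteq> {Poly_Mapping.single (lead_mon ord p) 1 | p. p \<in> I \<and> p \<noteq> 0}"
    "Poly_Mapping.single a 1 = (\<Sum>x\<in>A. c x * x)"
    using a unfolding init_ideal_def ideal_gen_def by blast
  have "(1::'k) = Poly_Mapping.lookup (\<Sum>x\<in>A. c x * x) a" by (simp flip: A(3))
  also have "\<dots> = (\<Sum>x\<in>A. Poly_Mapping.lookup (c x * x) a)" by (simp add: lookup_sum)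
  finally have one: "(1::'k) = (\<Sum>x\<in>A. Poly_Mapping.lookup (c x * x) a)" .
  have "\<exists>x\<in>A. Poly_Mapping.lookup (c x * x) a \<noteq> 0"
  proof (rule ccontr)
    assume "\<not> ?thesis"
    then have "(\<Sum>x\<in>A. Poly_Mapping.lookup (c x * x) a) = 0" by (intro sum.neutral) auto
    with one show False by simp
  qed
  then obtain x where x: "x \<in> A" "Poly_Mapping.lookup (c x * x) a \<noteq> 0" by blast
  obtain p where p: "x = Poly_Mapping.single (lead_mon ord p) 1" "p \<in> I" "p \<noteq> 0"
    using A(2) x(1) by blast
  define b where "b = lead_mon ord p"
  have b: "b \<in> Poly_Mapping.keys p" "\<forall>b'\<in>Poly_Mapping.keys p. ord b' b"
    using lead_mon_prop[OF mo p(3)] by (auto simp: b_def)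
  have "a \<in> Poly_Mapping.keys (c x * x)" using x(2) by (simp add: in_keys_iff)
  then obtain d where d: "a = d + b"
    using keys_mult[of "c x" x] p(1) by (auto simp: b_def)
  define h where "h = Poly_Mapping.single d 1 * p"
  have "h \<in> I" using I p(2) unfolding is_ideal_def h_def by blast
  moreover have "a \<in> Poly_Mapping.keys h"
    using b(1) by (simp add: h_def d lk1 in_keys_iff)
  moreover have "\<forall>b'\<in>Poly_Mapping.keys h. ord b' a"
  proof
    fix b' assume "b' \<in> Poly_Mapping.keys h"
    then obtain e where e: "b' = d + e" "e \<in> Poly_Mapping.keys p"
      using keys_mult[of "Poly_Mapping.single d 1" p] unfolding h_def by auto
    have "ord (e + d) (b + d)" using mo_props(5)[OF mo] b(2) e(2) by blast
    then show "ord b' a" by (simp add: e d add.commute)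
  qed
  ultimately show ?thesis by blast
qed




definition bad :: "(('v \<Rightarrow>\<^sub>0 nat) \<Rightarrow> ('v \<Rightarrow>\<^sub>0 nat) \<Rightarrow> bool) \<Rightarrow> ('v, 'k::comm_ring_1) mpoly set \<Rightarrow> ('v, 'k) mpoly \<Rightarrow> ('v \<Rightarrow>\<^sub>0 nat) set" where
  "bad ord I p = {a\<in>Poly_Mapping.keys p. Poly_Mapping.single a 1 \<in> init_ideal ord I}"

lemma std_iff_bad: "p \<in> std_span ord I \<longleftrightarrow> bad ord I p = {}"
  unfolding std_span_def bad_def by blast

lemma reduce_step:
  fixes ord :: "('v \<Rightarrow>\<^sub>0 nat) \<Rightarrow> ('v \<Rightarrow>\<^sub>0 nat) \<Rightarrow> bool" and I :: "('v, 'k::field) mpoly set"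
  assumes mo: "monomial_order ord" and I: "is_ideal I"
    and b: "b \<in> bad ord I p" and bmax: "\<forall>b'\<in>bad ord I p. ord b' b"
  shows "\<exists>h\<in>I. \<forall>b'\<in>bad ord I (p - h). ord b' b \<and> b' \<noteq> b"
proof -
  have b1: "Poly_Mapping.single b (1::'k) \<in> init_ideal ord I" "b \<in> Poly_Mapping.keys p"
    using b unfolding bad_def by auto
  obtain h where h: "h \<in> I" "b \<in> Poly_Mapping.keys h" "\<forall>b'\<in>Poly_Mapping.keys h. ord b' b"
    using reduce_exists[OF mo I b1(1)] by blast
  define c where "c = Poly_Mapping.lookup p b / Poly_Mapping.lookup h b"
  define h' where "h' = Poly_Mapping.single 0 c * h"
  have h'I: "h' \<in> I" using I h(1) unfolding is_ideal_def h'_def by blast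
  have lk: "Poly_Mapping.lookup (p - h') k = Poly_Mapping.lookup p k - c * Poly_Mapping.lookup h k" for k
    by (simp add: h'_def lookup_minus lk0)
  have hb: "Poly_Mapping.lookup h b \<noteq> 0" using h(2) by (simp add: in_keys_iff)
  have zero: "Poly_Mapping.lookup (p - h') b = 0"
    using hb by (simp add: lk c_def)
  have "\<forall>b'\<in>bad ord I (p - h'). ord b' b \<and> b' \<noteq> b"
  proof
    fix k assume k: "k \<in> bad ord I (p - h')"
    then have k1: "Poly_Mapping.lookup (p - h') k \<noteq> 0" "Poly_Mapping.single k (1::'k) \<in> init_ideal ord I"
      unfolding bad_def by (auto simp: in_keys_iff)
    have "k \<noteq> b" using k1(1) zero by auto
    moreover have "ord k b"
    proof (cases "Poly_Mapping.lookup p k = 0")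
      case True
      then have "k \<in> Poly_Mapping.keys h" using k1(1) by (auto simp: lk in_keys_iff)
      then show ?thesis using h(3) by blast
    next
      case False
      then have "k \<in> bad ord I p" using k1(2) unfolding bad_def by (simp add: in_keys_iff)
      then show ?thesis using bmax by blast
    qed
    ultimately show "ord k b \<and> k \<noteq> b" by blast
  qed
  then show ?thesis using h'I by blast
qed

lemma finite_bad: "finite (bad ord I p)"
  unfolding bad_def by simp

lemma normal_form:
  fixes ord :: "('v::finite \<Rightarrow>\<^sub>0 nat) \<Rightarrow> ('v \<Rightarrow>\<^sub>0 nat) \<Rightarrow> bool" and I :: "('v, 'k::field) mpoly set"
  assumes mo: "monomial_order ord" and I: "is_ideal I"
  shows "\<exists>q\<in>I. p - q \<in> std_span ord I"
proof -
  let ?R = "{(x,y). ord x y \<and> x \<noteq> y}"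
  have Iadd: "\<And>x y. x \<in> I \<Longrightarrow> y \<in> I \<Longrightarrow> x + y \<in> I" and I0: "0 \<in> I"
    using I unfolding is_ideal_def by blast+
  have main: "\<forall>p. (\<forall>b\<in>bad ord I p. (b, a) \<in> ?R) \<longrightarrow> (\<exists>q\<in>I. p - q \<in> std_span ord I)" for a
  proof (induction a rule: wf_induct[OF wf_ord[OF mo]])
    case (1 a)
    show ?case
    proof (intro allI impI)
      fix p assume pa: "\<forall>b\<in>bad ord I p. (b, a) \<in> ?R"
      show "\<exists>q\<in>I. p - q \<in> std_span ord I"
      proof (cases "bad ord I p = {}")
        case True
        then show ?thesis using I0 by (intro bexI[of _ 0]) (simp_all add: std_iff_bad)
      next
        case False
        then obtain b where b: "b \<in> bad ord I p" "\<forall>b'\<in>bad ord I p. ord b' b"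
          using exists_max[OF mo finite_bad] by blast
        obtain h where h: "h \<in> I" "\<forall>b'\<in>bad ord I (p - h). ord b' b \<and> b' \<noteq> b"
          using reduce_step[OF mo I b] by blast
        have "(b, a) \<in> ?R" using pa b(1) by blast
        then obtain q' where q': "q' \<in> I" "p - h - q' \<in> std_span ord I"
          using 1 h(2) by blast
        have "p - (h + q') \<in> std_span ord I" using q'(2) by (simp add: diff_diff_eq)
        then show ?thesis using Iadd[OF h(1) q'(1)] by blast
      qed
    qed
  qed
  show ?thesis
  proof (cases "bad ord I p = {}")
    case True
    then show ?thesis using I0 by (intro bexI[of _ 0]) (simp_all add: std_iff_bad)
  next
    case False
    then obtain b where b: "b \<in> bad ord I p" "\<forall>b'\<in>bad ord I p. ord b' b"
      using exists_max[OF mo finite_bad] by blast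
    obtain h where h: "h \<in> I" "\<forall>b'\<in>bad ord I (p - h). ord b' b \<and> b' \<noteq> b"
      using reduce_step[OF mo I b] by blast
    obtain q' where q': "q' \<in> I" "p - h - q' \<in> std_span ord I"
      using main[of b] h(2) by blast
    have "p - (h + q') \<in> std_span ord I" using q'(2) by (simp add: diff_diff_eq)
    then show ?thesis using Iadd[OF h(1) q'(1)] by blast
  qed
qed




lemma colon_ideal: "is_ideal (colon (submod_gen X) f)"
  unfolding is_ideal_def colon_def
  by (auto simp: sg_zero smult_vec_add1 sg_add smult_vec_assoc[symmetric] sg_smult)

lemma gens_Suc: "g ` {..<t} \<union> f ` {..<Suc k} = insert (f k) (g ` {..<t} \<union> f ` {..<k})"
  by (auto simp: lessThan_Suc)

lemma existence:
  fixes ord :: "('v::finite \<Rightarrow>\<^sub>0 nat) \<Rightarrow> ('v \<Rightarrow>\<^sub>0 nat) \<Rightarrow> bool"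
    and g f :: "nat \<Rightarrow> ('i \<Rightarrow> ('v, 'k::field) mpoly)"
  assumes mo: "monomial_order ord"
  shows "m \<in> submod_gen (g ` {..<t} \<union> f ` {..<k}) \<Longrightarrow>
    \<exists>l w. l \<in> submod_gen (g ` {..<t}) \<and>
      (\<forall>i<k. w i \<in> vec_times_set (f i) (std_span ord (colon (submod_gen (g ` {..<t} \<union> f ` {..<i})) (f i))))
      \<and> m = l + (\<Sum>i<k. w i)"
proof (induction k arbitrary: m)
  case 0
  then show ?case by (intro exI[of _ m] exI[of _ "\<lambda>_. 0"]) simp
next
  case (Suc k)
  let ?Lk = "submod_gen (g ` {..<t} \<union> f ` {..<k})"
  obtain m' c where m': "m' \<in> ?Lk" "m = m' + smult_vec c (f k)"
    using sg_insert_dest[of m "f k"] Suc.prems unfolding gens_Suc by blast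
  obtain q where q: "q \<in> colon ?Lk (f k)" "c - q \<in> std_span ord (colon ?Lk (f k))"
    using normal_form[OF mo colon_ideal] by blast
  have "m' + smult_vec q (f k) \<in> ?Lk"
    using q(1) m'(1) sg_add unfolding colon_def by blast
  then obtain l w where lw: "l \<in> submod_gen (g ` {..<t})"
      "\<forall>i<k. w i \<in> vec_times_set (f i) (std_span ord (colon (submod_gen (g ` {..<t} \<union> f ` {..<i})) (f i)))"
      "m' + smult_vec q (f k) = l + (\<Sum>i<k. w i)"
    using Suc.IH by blast
  define w' where "w' = w(k := smult_vec (c - q) (f k))"
  have "\<forall>i<Suc k. w' i \<in> vec_times_set (f i) (std_span ord (colon (submod_gen (g ` {..<t} \<union> f ` {..<i})) (f i)))"
    using lw(2) q(2) by (auto simp: w'_def vec_times_set_def less_Suc_eq)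
  moreover have "m = l + (\<Sum>i<Suc k. w' i)"
  proof -
    have "(\<Sum>i<k. w' i) = (\<Sum>i<k. w i)" by (rule sum.cong) (auto simp: w'_def)
    have "m = m' + smult_vec q (f k) + smult_vec (c - q) (f k)"
      using m'(2) by (simp add: add.assoc flip: smult_vec_add1)
    also have "\<dots> = l + (\<Sum>i<k. w' i) + w' k"
      using lw(3) \<open>(\<Sum>i<k. w' i) = (\<Sum>i<k. w i)\<close> by (simp add: w'_def)
    finally show ?thesis by (simp add: add.assoc)
  qed
  ultimately show ?case using lw(1) by blast
qed

lemma uniqueness:
  fixes ord :: "('v::finite \<Rightarrow>\<^sub>0 nat) \<Rightarrow> ('v \<Rightarrow>\<^sub>0 nat) \<Rightarrow> bool"
    and g f :: "nat \<Rightarrow> ('i \<Rightarrow> ('v, 'k::field) mpoly)"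
  assumes mo: "monomial_order ord"
  shows "l \<in> submod_gen (g ` {..<t}) \<Longrightarrow>
      (\<forall>i<k. w i \<in> vec_times_set (f i) (std_span ord (colon (submod_gen (g ` {..<t} \<union> f ` {..<i})) (f i))))
      \<Longrightarrow> l + (\<Sum>i<k. w i) = 0 \<Longrightarrow> l = 0 \<and> (\<forall>i<k. w i = 0)"
proof (induction k arbitrary: l)
  case 0
  then show ?case by simp
next
  case (Suc k)
  let ?Lk = "submod_gen (g ` {..<t} \<union> f ` {..<k})"
  obtain p where p: "p \<in> std_span ord (colon ?Lk (f k))" "w k = smult_vec p (f k)"
    using Suc.prems(2) unfolding vec_times_set_def by auto
  have lL: "l \<in> ?Lk" using Suc.prems(1) sg_mono[of "g ` {..<t}" "g ` {..<t} \<union> f ` {..<k}"] by blast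
  have wL: "w i \<in> ?Lk" if ik: "i < k" for i
  proof -
    have "i < Suc k" using ik by simp
    then have "w i \<in> vec_times_set (f i) (std_span ord (colon (submod_gen (g ` {..<t} \<union> f ` {..<i})) (f i)))"
      using Suc.prems(2) by blast
    then obtain r where "w i = smult_vec r (f i)" unfolding vec_times_set_def by blast
    moreover have "f i \<in> ?Lk" using ik by (intro sg_gen) auto
    ultimately show ?thesis using sg_smult by simp
  qed
  have "l + (\<Sum>i<k. w i) \<in> ?Lk" using lL wL by (intro sg_add sg_sum) auto
  moreover have "w k = - (l + (\<Sum>i<k. w i))"
  proof -
    have "(l + (\<Sum>i<k. w i)) + w k = 0" using Suc.prems(3) by (simp only: sum.lessThan_Suc add.assoc)
    then show ?thesis by (simp only: neg_eq_iff_add_eq_0 eq_commute[of "w k"])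
  qed
  ultimately have "smult_vec p (f k) \<in> ?Lk" using p(2) sg_uminus by metis
  then have "p \<in> colon ?Lk (f k)" unfolding colon_def by simp
  with std_inter[OF mo this p(1)] have "w k = 0" using p(2) by simp
  moreover have "l + ((\<Sum>i<k. w i) + w k) = 0" using Suc.prems(3) by (simp only: sum.lessThan_Suc add.assoc)
  ultimately have "l + (\<Sum>i<k. w i) = 0" by (simp only: add_0_right)
  moreover have "\<forall>i<k. w i \<in> vec_times_set (f i) (std_span ord (colon (submod_gen (g ` {..<t} \<union> f ` {..<i})) (f i)))"
    using Suc.prems(2) by (meson less_SucI)
  ultimately have "l = 0 \<and> (\<forall>i<k. w i = 0)" using Suc.IH[OF Suc.prems(1)] by blast
  with \<open>w k = 0\<close> show ?case using less_Suc_eq by auto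
qed

theorem lemma6p2:
  fixes ord :: "('v::finite \<Rightarrow>\<^sub>0 nat) \<Rightarrow> ('v \<Rightarrow>\<^sub>0 nat) \<Rightarrow> bool"
    and g f :: "nat \<Rightarrow> ('i::finite \<Rightarrow> ('v, 'k::field) mpoly)"
    and t s :: nat
  assumes "monomial_order ord"
  defines "M \<equiv> submod_gen (g ` {..<t} \<union> f ` {..<s})"
      and "L \<equiv> submod_gen (g ` {..<t})"
      and "Lk \<equiv> (\<lambda>k. submod_gen (g ` {..<t} \<union> f ` {..<k}))"
  shows "M = {l + (\<Sum>i<s. w i) | l w. l \<in> L \<and>
                 (\<forall>i<s. w i \<in> vec_times_set (f i) (std_span ord (colon (Lk i) (f i))))}
       \<and> (\<forall>l w. l \<in> L \<and> (\<forall>i<s. w i \<in> vec_times_set (f i) (std_span ord (colon (Lk i) (f i))))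
              \<and> l + (\<Sum>i<s. w i) = 0 \<longrightarrow> l = 0 \<and> (\<forall>i<s. w i = 0))"
proof (rule conjI)
  show "M = {l + (\<Sum>i<s. w i) | l w. l \<in> L \<and>
                 (\<forall>i<s. w i \<in> vec_times_set (f i) (std_span ord (colon (Lk i) (f i))))}"
  proof
    show "M \<subseteq> {l + (\<Sum>i<s. w i) | l w. l \<in> L \<and>
                 (\<forall>i<s. w i \<in> vec_times_set (f i) (std_span ord (colon (Lk i) (f i))))}"
    proof
      fix m assume "m \<in> M"
      then show "m \<in> {l + (\<Sum>i<s. w i) | l w. l \<in> L \<and>
                 (\<forall>i<s. w i \<in> vec_times_set (f i) (std_span ord (colon (Lk i) (f i))))}"
        using existence[OF assms(1), of m g t f s] unfolding M_def L_def Lk_def by blast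
    qed
  next
    show "{l + (\<Sum>i<s. w i) | l w. l \<in> L \<and>
                 (\<forall>i<s. w i \<in> vec_times_set (f i) (std_span ord (colon (Lk i) (f i))))} \<subseteq> M"
    proof clarify
      fix l w assume l: "l \<in> L" and w: "\<forall>i<s. w i \<in> vec_times_set (f i) (std_span ord (colon (Lk i) (f i)))"
      have "l \<in> M" using l sg_mono[of "g ` {..<t}" "g ` {..<t} \<union> f ` {..<s}"] unfolding M_def L_def by blast
      moreover have "w i \<in> M" if hi: "i < s" for i
      proof -
        obtain r where "w i = smult_vec r (f i)" using w hi unfolding vec_times_set_def by blast
        moreover have "f i \<in> M" unfolding M_def using hi by (intro sg_gen) auto
        ultimately show ?thesis unfolding M_def using sg_smult by simp
      qed
      ultimately show "l + (\<Sum>i<s. w i) \<in> M" unfolding M_def by (intro sg_add sg_sum) auto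
    qed
  qed
next
  show "\<forall>l w. l \<in> L \<and> (\<forall>i<s. w i \<in> vec_times_set (f i) (std_span ord (colon (Lk i) (f i))))
              \<and> l + (\<Sum>i<s. w i) = 0 \<longrightarrow> l = 0 \<and> (\<forall>i<s. w i = 0)"
  proof (intro allI impI)
    fix l w
    assume "l \<in> L \<and> (\<forall>i<s. w i \<in> vec_times_set (f i) (std_span ord (colon (Lk i) (f i)))) \<and> l + (\<Sum>i<s. w i) = 0"
    then show "l = 0 \<and> (\<forall>i<s. w i = 0)"
      using uniqueness[OF assms(1), of l g t s w f] unfolding L_def Lk_def by blast
  qed
qed

end
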